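(* For any vertex $i\in[n]$ (fixed as $n\to\infty$), $h_{n,2}(i)/\sqrt{\ln n}\to0$ in probability as $n\to\infty$.
   Context: Kingman's $n$-coalescent $(F_n,\dots,F_1)$: forests on $[n]$, rooted trees with edges directed towards roots; $F_n$ has no edges; for $2\le i\le n$, list the trees of $F_i$ as $T^{(i)}_1,\dots,T^{(i)}_i$ in increasing order of smallest label, choose $\{a_i,b_i\}$ uniformly among 2-subsets of $[i]$ and an independent fair bit $\xi_i$ (independent over $i$), and obtain $F_{i-1}$ by adding an edge between the roots of $T^{(i)}_{a_i},T^{(i)}_{b_i}$ directed towards the root of $T^{(i)}_{\min(a_i,b_i)}$ if $\xi_i=1$, towards the other root otherwise. $h_{F_j}(v)$ is the depth of $v$ in its tree in $F_j$; $h_n(v)=h_{F_1}(v)$; $h_{n,1}(v)=h_{F_{\lfloor\ln^2 n\rfloor}}(v)$; $h_{n,2}(v)=h_n(v)-h_{n,1}(v)$. *)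

theory Defs
  imports "HOL-Probability.Probability"
begin

text \<open>A forest on [n] = {1..n} is represented by a parent map
  par :: nat \<Rightarrow> nat option (None = v is a root); edges point from
  a vertex to its parent, i.e. towards the root.\<close>

type_synonym forest = "nat \<Rightarrow> nat option"

fun anc :: "forest \<Rightarrow> nat \<Rightarrow> nat \<Rightarrow> nat option" where
  "anc par 0 v = Some v"
| "anc par (Suc k) v = Option.bind (anc par k v) par"

definition depth :: "forest \<Rightarrow> nat \<Rightarrow> nat" where
  "depth par v = (LEAST k. par (the (anc par k v)) = None)"

definition root_of :: "forest \<Rightarrow> nat \<Rightarrow> nat" where
  "root_of par v = the (anc par (depth par v) v)"

definition min_labels :: "nat \<Rightarrow> forest \<Rightarrow> nat set" where
  "min_labels n par = {u \<in> {1..n}. \<forall>w \<in> {1..n}. root_of par w = root_of par u \<longrightarrow> u \<le> w}"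

definition tree_root :: "nat \<Rightarrow> forest \<Rightarrow> nat \<Rightarrow> nat" where
  "tree_root n par k = root_of par (sorted_list_of_set (min_labels n par) ! (k - 1))"

text \<open>One coalescence step with choice (a, b, xi), where a < b encodes the
  2-subset {a,b} and xi = True encodes the bit value 1.\<close>
definition coal_step :: "nat \<Rightarrow> forest \<Rightarrow> nat \<times> nat \<times> bool \<Rightarrow> forest" where
  "coal_step n par c = (case c of (a, b, xi) \<Rightarrow>
     (let ra = tree_root n par (min a b); rb = tree_root n par (max a b) in
      if xi then par(rb := Some ra) else par(ra := Some rb)))"

text \<open>coal n ch k = F_{n-k}, given the choices ch i for 2 \<le> i \<le> n.\<close>
fun coal :: "nat \<Rightarrow> (nat \<Rightarrow> nat \<times> nat \<times> bool) \<Rightarrow> nat \<Rightarrow> forest" where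
  "coal n ch 0 = (\<lambda>_. None)"
| "coal n ch (Suc k) = coal_step n (coal n ch k) (ch (n - k))"

definition F :: "nat \<Rightarrow> (nat \<Rightarrow> nat \<times> nat \<times> bool) \<Rightarrow> nat \<Rightarrow> forest" where
  "F n ch j = coal n ch (n - j)"

definition choice_pmf :: "nat \<Rightarrow> (nat \<times> nat \<times> bool) pmf" where
  "choice_pmf i = pmf_of_set {(a, b, xi). 1 \<le> a \<and> a < b \<and> b \<le> i}"

definition choices :: "nat \<Rightarrow> (nat \<Rightarrow> nat \<times> nat \<times> bool) pmf" where
  "choices n = Pi_pmf {2..n} (0, 0, False) choice_pmf"

definition h_n :: "nat \<Rightarrow> (nat \<Rightarrow> nat \<times> nat \<times> bool) \<Rightarrow> nat \<Rightarrow> nat" where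
  "h_n n ch v = depth (F n ch 1) v"

definition h_n1 :: "nat \<Rightarrow> (nat \<Rightarrow> nat \<times> nat \<times> bool) \<Rightarrow> nat \<Rightarrow> nat" where
  "h_n1 n ch v = depth (F n ch (nat \<lfloor>(ln (real n))^2\<rfloor>)) v"

definition h_n2 :: "nat \<Rightarrow> (nat \<Rightarrow> nat \<times> nat \<times> bool) \<Rightarrow> nat \<Rightarrow> real" where
  "h_n2 n ch v = real (h_n n ch v) - real (h_n1 n ch v)"

end

theory Submission
  imports Defs "HOL-Real_Asymp.Real_Asymp"
begin


lemma anc_None_add: "anc par k v = None \<Longrightarrow> anc par (k + d) v = None"
  by (induction d) auto

lemma anc_Some_le: "anc par k v = Some x \<Longrightarrow> m \<le> k \<Longrightarrow> \<exists>y. anc par m v = Some y"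
  using anc_None_add[of par m v "k - m"] by (cases "anc par m v") auto

lemma anc_root_unique:
  assumes "anc par k v = Some r" "par r = None" "anc par k' v = Some r'" "par r' = None"
  shows "k = k'"
proof (rule ccontr)
  assume "k \<noteq> k'"
  then consider "k < k'" | "k' < k" by linarith
  then show False
  proof cases
    case 1
    have "anc par (Suc k) v = None" using assms by simp
    then have "anc par (Suc k + (k' - Suc k)) v = None" by (rule anc_None_add)
    with 1 assms show False by simp
  next
    case 2
    have "anc par (Suc k') v = None" using assms by simp
    then have "anc par (Suc k' + (k - Suc k')) v = None" by (rule anc_None_add)
    with 2 assms show False by simp
  qed
qed

lemma depth_root:
  assumes "anc par k v = Some r" "par r = None"
  shows "depth par v = k" "root_of par v = r"
proof -
  define m where "m = (LEAST k. par (the (anc par k v)) = None)"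
  have "par (the (anc par k v)) = None" using assms by simp
  then have m: "par (the (anc par m v)) = None" "m \<le> k" unfolding m_def
    by (auto intro: LeastI Least_le)
  then obtain y where y: "anc par m v = Some y" using anc_Some_le[OF assms(1)] by blast
  with m have "m = k" using anc_root_unique[OF y _ assms] by simp
  then show "depth par v = k" unfolding depth_def m_def by simp
  then show "root_of par v = r" unfolding root_of_def using assms by simp
qed

lemma anc_before_nonroot:
  assumes "anc par k v = Some r" "m < k" "anc par m v = Some x"
  shows "par x \<noteq> None"
proof
  assume "par x = None"
  then have "anc par (Suc m) v = None" using assms by simp
  then have "anc par (Suc m + (k - Suc m)) v = None" by (rule anc_None_add)
  with assms show False by simp
qed

lemma anc_upd_same:
  assumes "anc par k v = Some r" "par rb = None" "m \<le> k"
  shows "anc (par(rb := Some ra)) m v = anc par m v"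
  using assms(3)
proof (induction m)
  case 0 then show ?case by simp
next
  case (Suc m)
  then have "m \<le> k" by simp
  then have IH: "anc (par(rb := Some ra)) m v = anc par m v" by (rule Suc.IH)
  obtain x where x: "anc par m v = Some x" using anc_Some_le[OF assms(1)] Suc by fastforce
  have "par x \<noteq> None" using anc_before_nonroot[OF assms(1) _ x] Suc by simp
  then have "x \<noteq> rb" using assms by auto
  have "anc (par(rb := Some ra)) (Suc m) v = Option.bind (anc (par(rb := Some ra)) m v) (par(rb := Some ra))"
    by (simp only: anc.simps)
  also have "\<dots> = (par(rb := Some ra)) x" using IH x by simp
  also have "\<dots> = par x" using \<open>x \<noteq> rb\<close> by simp
  also have "\<dots> = anc par (Suc m) v" using x by simp
  finally show ?case .
qed

lemma upd_depth:
  assumes "anc par k v = Some r" "par r = None" "par rb = None" "par ra = None" "ra \<noteq> rb"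
  shows "\<exists>k' r'. anc (par(rb := Some ra)) k' v = Some r' \<and> (par(rb := Some ra)) r' = None
     \<and> k' = k + (if r = rb then 1 else 0) \<and> (r = rb \<longrightarrow> r' = ra) \<and> (r \<noteq> rb \<longrightarrow> r' = r)"
proof -
  have same: "anc (par(rb := Some ra)) k v = Some r" using anc_upd_same[OF assms(1,3)] assms by simp
  show ?thesis
  proof (cases "r = rb")
    case True
    then have "anc (par(rb := Some ra)) (Suc k) v = Some ra" using same by simp
    then show ?thesis using True assms by (intro exI[of _ "Suc k"] exI[of _ ra]) auto
  next
    case False
    then show ?thesis using same assms by (intro exI[of _ k] exI[of _ r]) auto
  qed
qed



definition Inv :: "nat \<Rightarrow> nat \<Rightarrow> forest \<Rightarrow> bool" where
  "Inv n j par \<longleftrightarrow> (\<forall>v. v \<notin> {1..n} \<longrightarrow> par v = None) \<and> (\<forall>v w. par v = Some w \<longrightarrow> w \<in> {1..n})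
     \<and> (\<forall>v. \<exists>k r. anc par k v = Some r \<and> par r = None) \<and> card {r\<in>{1..n}. par r = None} = j"

definition Sset :: "nat \<Rightarrow> (nat \<times> nat \<times> bool) set" where
  "Sset j = {(a, b, xi). 1 \<le> a \<and> a < b \<and> b \<le> j}"

definition loser_idx :: "nat \<times> nat \<times> bool \<Rightarrow> nat" where
  "loser_idx c = (case c of (a, b, xi) \<Rightarrow> if xi then b else a)"

definition Kf :: "nat \<Rightarrow> forest \<Rightarrow> nat \<Rightarrow> nat \<Rightarrow> nat" where
  "Kf n par j i = (SOME k. k \<in> {1..j} \<and> tree_root n par k = root_of par i)"

lemma InvD:
  assumes "Inv n j par"
  shows "\<And>v. v \<notin> {1..n} \<Longrightarrow> par v = None" "\<And>v w. par v = Some w \<Longrightarrow> w \<in> {1..n}"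
    "card {r\<in>{1..n}. par r = None} = j"
proof -
  note X = assms[unfolded Inv_def]
  show "\<And>v. v \<notin> {1..n} \<Longrightarrow> par v = None" using conjunct1[OF X] by blast
  show "\<And>v w. par v = Some w \<Longrightarrow> w \<in> {1..n}" using conjunct1[OF conjunct2[OF X]] by blast
  show "card {r\<in>{1..n}. par r = None} = j" using conjunct2[OF conjunct2[OF conjunct2[OF X]]] by blast
qed

lemma InvD_root: "Inv n j par \<Longrightarrow> \<exists>k r. anc par k v = Some r \<and> par r = None"
  using conjunct1[OF conjunct2[OF conjunct2[OF iffD1[OF Inv_def]]]] by blast

lemma Inv_root:
  assumes "Inv n j par"
  shows "anc par (depth par v) v = Some (root_of par v) \<and> par (root_of par v) = None"
proof -
  have "\<exists>k r. anc par k v = Some r \<and> par r = None" using InvD_root[OF assms] .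
  then obtain k r where "anc par k v = Some r" "par r = None" by blast
  then show ?thesis using depth_root[of par k v r] by simp
qed

lemma anc_in:
  assumes "\<forall>v w. par v = Some w \<longrightarrow> w \<in> {1..n}" "v \<in> {1..n}" "anc par k v = Some x"
  shows "x \<in> {1..n}"
proof (cases k)
  case 0 then show ?thesis using assms(2,3) by simp
next
  case (Suc k')
  have "anc par k v = Option.bind (anc par k' v) par" unfolding Suc by simp
  then obtain y where "par y = Some x" using assms(3) by (cases "anc par k' v") auto
  then show ?thesis using assms(1) by blast
qed

lemma root_in:
  assumes "Inv n j par" "v \<in> {1..n}"
  shows "root_of par v \<in> {r\<in>{1..n}. par r = None}"
proof -
  have "\<forall>v w. par v = Some w \<longrightarrow> w \<in> {1..n}" using InvD(2)[OF assms(1)] by blast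
  moreover have r: "anc par (depth par v) v = Some (root_of par v)" "par (root_of par v) = None"
    using Inv_root[OF assms(1), of v] by simp_all
  ultimately have "root_of par v \<in> {1..n}" using anc_in assms(2) by blast
  then show ?thesis using r(2) by simp
qed

lemma root_of_root: "par r = None \<Longrightarrow> root_of par r = r"
  using depth_root[of par 0 r r] by simp

lemma min_labels_props:
  assumes "Inv n j par"
  shows "inj_on (root_of par) (min_labels n par)"
    "root_of par ` min_labels n par = {r\<in>{1..n}. par r = None}"
    "card (min_labels n par) = j" "min_labels n par \<subseteq> {1..n}"
proof -
  show inj: "inj_on (root_of par) (min_labels n par)"
  proof (rule inj_onI)
    fix u u' assume u: "u \<in> min_labels n par" "u' \<in> min_labels n par" "root_of par u = root_of par u'"
    have "u \<le> u'" using u unfolding min_labels_def by auto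
    moreover have "u' \<le> u" using u unfolding min_labels_def by auto
    ultimately show "u = u'" by simp
  qed
  show sub: "min_labels n par \<subseteq> {1..n}" unfolding min_labels_def by auto
  show img: "root_of par ` min_labels n par = {r\<in>{1..n}. par r = None}"
  proof
    show "root_of par ` min_labels n par \<subseteq> {r\<in>{1..n}. par r = None}"
      using root_in[OF assms] sub by auto
  next
    show "{r\<in>{1..n}. par r = None} \<subseteq> root_of par ` min_labels n par"
    proof
      fix r assume r: "r \<in> {r\<in>{1..n}. par r = None}"
      define C where "C = {w\<in>{1..n}. root_of par w = r}"
      have "r \<in> C" using r root_of_root[of par r] unfolding C_def by auto
      then have fC: "finite C" "C \<noteq> {}" unfolding C_def by auto
      define u where "u = Min C"
      have "u \<in> C" unfolding u_def using fC by simp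
      moreover have "\<forall>w\<in>C. u \<le> w" unfolding u_def using fC by simp
      ultimately have "u \<in> min_labels n par" "root_of par u = r"
        unfolding min_labels_def C_def by auto
      then show "r \<in> root_of par ` min_labels n par" by blast
    qed
  qed
  have "card (min_labels n par) = card {r\<in>{1..n}. par r = None}"
    using card_image[OF inj] img by simp
  then show "card (min_labels n par) = j" using InvD(3)[OF assms] by simp
qed

lemma tree_root_props:
  assumes "Inv n j par"
  shows "\<And>k. k \<in> {1..j} \<Longrightarrow> tree_root n par k \<in> {r\<in>{1..n}. par r = None}"
    "inj_on (tree_root n par) {1..j}"
proof -
  note P = min_labels_props[OF assms]
  define xs where "xs = sorted_list_of_set (min_labels n par)"
  have fin: "finite (min_labels n par)" using P(4) finite_subset by blast
  have len: "length xs = j" using P(3) fin unfolding xs_def by simp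
  have dist: "distinct xs" unfolding xs_def by simp
  have set: "set xs = min_labels n par" unfolding xs_def using fin by simp
  have tr: "tree_root n par k = root_of par (xs ! (k - 1))" for k
    unfolding tree_root_def xs_def by simp
  have mem: "xs ! (k - 1) \<in> min_labels n par" if "k \<in> {1..j}" for k
  proof -
    have "k - 1 < length xs" using that len by auto
    then show ?thesis using set nth_mem by blast
  qed
  show "tree_root n par k \<in> {r\<in>{1..n}. par r = None}" if "k \<in> {1..j}" for k
    using P(2) tr mem[OF that] by blast
  show "inj_on (tree_root n par) {1..j}"
  proof (rule inj_onI)
    fix k k' assume k: "k \<in> {1..j}" "k' \<in> {1..j}" "tree_root n par k = tree_root n par k'"
    have "root_of par (xs ! (k - 1)) = root_of par (xs ! (k' - 1))" using k(3) tr by simp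
    then have "xs ! (k - 1) = xs ! (k' - 1)" using inj_onD[OF P(1) _ mem[OF k(1)] mem[OF k(2)]] by blast
    moreover have "k - 1 < length xs" "k' - 1 < length xs" using k len by auto
    ultimately have "k - 1 = k' - 1" using nth_eq_iff_index_eq[OF dist] by blast
    then show "k = k'" using k by auto
  qed
qed

lemma Inv_upd:
  assumes "Inv n j par" "w \<in> {r\<in>{1..n}. par r = None}" "l \<in> {r\<in>{1..n}. par r = None}" "w \<noteq> l"
  shows "Inv n (j - 1) (par(l := Some w))"
    "\<And>v. depth (par(l := Some w)) v = depth par v + (if root_of par v = l then 1 else 0)"
proof -
  have ex: "\<exists>k' r'. anc (par(l := Some w)) k' v = Some r' \<and> (par(l := Some w)) r' = None
     \<and> k' = depth par v + (if root_of par v = l then 1 else 0)" for v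
  proof -
    have r: "anc par (depth par v) v = Some (root_of par v)" "par (root_of par v) = None"
      using Inv_root[OF assms(1), of v] by auto
    have "par l = None" "par w = None" using assms(2,3) by auto
    from upd_depth[OF r this assms(4)] show ?thesis by blast
  qed
  show "depth (par(l := Some w)) v = depth par v + (if root_of par v = l then 1 else 0)" for v
  proof -
    obtain k' r' where "anc (par(l := Some w)) k' v = Some r'" "(par(l := Some w)) r' = None"
      "k' = depth par v + (if root_of par v = l then 1 else 0)" using ex[of v] by blast
    then show ?thesis using depth_root(1) by metis
  qed
  have R: "{r\<in>{1..n}. (par(l := Some w)) r = None} = {r\<in>{1..n}. par r = None} - {l}" by auto
  have fin: "finite {r\<in>{1..n}. par r = None}" by simp
  show "Inv n (j - 1) (par(l := Some w))"
    unfolding Inv_def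
  proof (intro conjI allI impI)
    show "(par(l := Some w)) v = None" if "v \<notin> {1..n}" for v
      using assms(3) InvD(1)[OF assms(1) that] that by auto
    show "x \<in> {1..n}" if "(par(l := Some w)) v = Some x" for v x
      using assms(2) InvD(2)[OF assms(1), of v x] that by (auto split: if_splits)
    show "\<exists>k r. anc (par(l := Some w)) k v = Some r \<and> (par(l := Some w)) r = None" for v
      using ex[of v] by blast
    show "card {r\<in>{1..n}. (par(l := Some w)) r = None} = j - 1"
      unfolding R using assms(3) card_Diff_singleton InvD(3)[OF assms(1)] by simp
  qed
qed

lemma step_lemma:
  assumes "Inv n j par" "2 \<le> j" "c \<in> Sset j"
  shows "Inv n (j - 1) (coal_step n par c)"
    "depth par i \<le> depth (coal_step n par c) i"
    "depth (coal_step n par c) i \<le> depth par i + (if loser_idx c = Kf n par j i then 1 else 0)"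
proof -
  obtain a b xi where c: "c = (a, b, xi)" "1 \<le> a" "a < b" "b \<le> j"
    using assms(3) unfolding Sset_def by auto
  note T = tree_root_props[OF assms(1)]
  define ra where "ra = tree_root n par a"
  define rb where "rb = tree_root n par b"
  have ra: "ra \<in> {r\<in>{1..n}. par r = None}" unfolding ra_def using T(1) c by simp
  have rb: "rb \<in> {r\<in>{1..n}. par r = None}" unfolding rb_def using T(1) c by simp
  have neq: "ra \<noteq> rb" unfolding ra_def rb_def using inj_onD[OF T(2), of a b] c by auto
  define w where "w = (if xi then ra else rb)"
  define l where "l = (if xi then rb else ra)"
  have cs: "coal_step n par c = par(l := Some w)"
    unfolding coal_step_def c w_def l_def ra_def rb_def using c by (simp add: Let_def min_def max_def)
  have wl: "w \<in> {r\<in>{1..n}. par r = None}" "l \<in> {r\<in>{1..n}. par r = None}" "w \<noteq> l"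
    using ra rb neq unfolding w_def l_def by auto
  note U = Inv_upd[OF assms(1) wl]
  show "Inv n (j - 1) (coal_step n par c)" using U(1) cs by simp
  show "depth par i \<le> depth (coal_step n par c) i" using U(2) cs by simp
  have lt: "l = tree_root n par (loser_idx c)" "loser_idx c \<in> {1..j}"
    unfolding l_def loser_idx_def c ra_def rb_def using c by auto
  have "loser_idx c = Kf n par j i" if "root_of par i = l"
  proof -
    have ex: "\<exists>k. k \<in> {1..j} \<and> tree_root n par k = root_of par i"
      using lt that by (intro exI[of _ "loser_idx c"]) simp
    have "Kf n par j i \<in> {1..j} \<and> tree_root n par (Kf n par j i) = root_of par i"
      unfolding Kf_def using someI_ex[OF ex] .
    then have "tree_root n par (loser_idx c) = tree_root n par (Kf n par j i)" "Kf n par j i \<in> {1..j}"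
      using lt that by simp_all
    then show ?thesis using inj_onD[OF T(2)] lt(2) by blast
  qed
  then show "depth (coal_step n par c) i \<le> depth par i + (if loser_idx c = Kf n par j i then 1 else 0)"
  proof (cases "root_of par i = l")
    case True
    then show ?thesis using U(2)[of i] cs \<open>root_of par i = l \<Longrightarrow> _\<close> by simp
  next
    case False
    then show ?thesis using U(2)[of i] cs by simp
  qed
qed

definition valid :: "nat \<Rightarrow> (nat \<Rightarrow> nat \<times> nat \<times> bool) \<Rightarrow> bool" where
  "valid n ch \<longleftrightarrow> (\<forall>j\<in>{2..n}. ch j \<in> Sset j)"

lemma Inv_coal:
  assumes "valid n ch" "k \<le> n - 1"
  shows "Inv n (n - k) (coal n ch k)"
  using assms(2)
proof (induction k)
  case 0
  have e: "{r\<in>{1..n}. (\<lambda>_. None :: nat option) r = None} = {1..n}" by blast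
  have c: "card {r\<in>{1..n}. (\<lambda>_. None :: nat option) r = None} = n" unfolding e by simp
  have "\<exists>k r. anc (\<lambda>_. None) k v = Some r \<and> (\<lambda>_. None :: nat option) r = None" for v
    by (rule exI[of _ 0]) simp
  then show ?case unfolding Inv_def using c by simp
next
  case (Suc k)
  then have I: "Inv n (n - k) (coal n ch k)" by simp
  have j: "2 \<le> n - k" "n - k \<le> n" using Suc by auto
  have "ch (n - k) \<in> Sset (n - k)" using assms(1) j unfolding valid_def by auto
  from step_lemma(1)[OF I j(1) this] show ?case by simp
qed



definition Ev :: "nat \<Rightarrow> nat \<Rightarrow> (nat \<Rightarrow> nat \<times> nat \<times> bool) \<Rightarrow> nat \<Rightarrow> bool" where
  "Ev n i ch j \<longleftrightarrow> loser_idx (ch j) = Kf n (coal n ch (n - j)) j i"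

lemma accum:
  assumes "valid n ch" "1 \<le> L" "L \<le> n"
  shows "d \<le> L - 1 \<Longrightarrow> depth (coal n ch (n - L)) i \<le> depth (coal n ch (n - L + d)) i \<and>
    depth (coal n ch (n - L + d)) i \<le> depth (coal n ch (n - L)) i + card {j\<in>{L - d + 1..L}. Ev n i ch j}"
proof (induction d)
  case 0
  have "{j\<in>{L + 1..L}. Ev n i ch j} = {}" by auto
  then show ?case by simp
next
  case (Suc d)
  define k where "k = n - L + d"
  have k: "Suc k \<le> n - 1" "k \<le> n - 1" using Suc.prems assms unfolding k_def by auto
  have I: "Inv n (n - k) (coal n ch k)" using Inv_coal[OF assms(1) k(2)] .
  have j: "2 \<le> n - k" using k by auto
  have c: "ch (n - k) \<in> Sset (n - k)" using assms(1) j unfolding valid_def by auto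
  have nk: "n - (n - k) = k" using k by auto
  have cs: "coal n ch (Suc k) = coal_step n (coal n ch k) (ch (n - k))" by simp
  note S = step_lemma[OF I j c]
  have ev: "(loser_idx (ch (n - k)) = Kf n (coal n ch k) (n - k) i) = Ev n i ch (n - k)"
    unfolding Ev_def nk ..
  have IH: "depth (coal n ch (n - L)) i \<le> depth (coal n ch k) i \<and>
    depth (coal n ch k) i \<le> depth (coal n ch (n - L)) i + card {j\<in>{L - d + 1..L}. Ev n i ch j}"
    using Suc unfolding k_def by simp
  have set: "{L - Suc d + 1..L} = insert (n - k) {L - d + 1..L}" "n - k \<notin> {L - d + 1..L}"
    using Suc.prems assms unfolding k_def by auto
  have cd: "card {j\<in>{L - Suc d + 1..L}. Ev n i ch j} \<ge> card {j\<in>{L - d + 1..L}. Ev n i ch j} + (if Ev n i ch (n - k) then 1 else 0)"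
  proof -
    define A where "A = {j\<in>{L - d + 1..L}. Ev n i ch j}"
    have fA: "finite A" "n - k \<notin> A" unfolding A_def using set(2) by auto
    have "{j\<in>insert (n - k) {L - d + 1..L}. Ev n i ch j} = (if Ev n i ch (n - k) then insert (n - k) A else A)"
      unfolding A_def by auto
    then show ?thesis unfolding set(1) A_def[symmetric] using fA by simp
  qed
  have "n - L + Suc d = Suc k" unfolding k_def using assms Suc.prems by simp
  have s3: "depth (coal n ch (Suc k)) i \<le> depth (coal n ch k) i + (if Ev n i ch (n - k) then 1 else 0)"
    using S(3)[of i] unfolding cs ev .
  have s2: "depth (coal n ch k) i \<le> depth (coal n ch (Suc k)) i" using S(2)[of i] unfolding cs .
  have "depth (coal n ch (n - L)) i \<le> depth (coal n ch (Suc k)) i \<and>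
    depth (coal n ch (Suc k)) i \<le> depth (coal n ch (n - L)) i + card {j\<in>{L - Suc d + 1..L}. Ev n i ch j}"
    using IH s2 s3 cd by (cases "Ev n i ch (n - k)") simp_all
  then show ?case using \<open>n - L + Suc d = Suc k\<close> by simp
qed

lemma h_n2_bound:
  assumes "valid n ch" "1 \<le> L" "L \<le> n" "L = nat \<lfloor>(ln (real n))^2\<rfloor>"
  shows "0 \<le> h_n2 n ch i" "h_n2 n ch i \<le> real (card {j\<in>{2..L}. Ev n i ch j})"
proof -
  have A: "depth (coal n ch (n - L)) i \<le> depth (coal n ch (n - L + (L - 1))) i \<and>
    depth (coal n ch (n - L + (L - 1))) i \<le> depth (coal n ch (n - L)) i + card {j\<in>{L - (L - 1) + 1..L}. Ev n i ch j}"
    using accum[OF assms(1-3), of "L - 1"] by simp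
  have e: "n - L + (L - 1) = n - 1" "L - (L - 1) + 1 = 2" using assms by auto
  have hn: "h_n n ch i = depth (coal n ch (n - 1)) i" unfolding h_n_def F_def by simp
  have hn1: "h_n1 n ch i = depth (coal n ch (n - L)) i" unfolding h_n1_def F_def assms(4) by simp
  show "0 \<le> h_n2 n ch i" using A unfolding e h_n2_def hn hn1 by simp
  show "h_n2 n ch i \<le> real (card {j\<in>{2..L}. Ev n i ch j})" using A unfolding e h_n2_def hn hn1 by simp
qed



lemma Sset_Suc: "Sset (Suc j) = Sset j \<union> (\<lambda>(a, xi). (a, Suc j, xi)) ` ({1..j} \<times> UNIV)"
  unfolding Sset_def by (auto simp: image_iff) 

lemma finite_Sset: "finite (Sset j)"
proof -
  have "Sset j \<subseteq> {1..j} \<times> {1..j} \<times> UNIV" unfolding Sset_def by auto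
  then show ?thesis by (rule finite_subset) simp
qed

lemma card_Sset: "card (Sset j) = j * (j - 1)"
proof (induction j)
  case 0
  have "Sset 0 = {}" unfolding Sset_def by auto
  then show ?case by simp
next
  case (Suc j)
  have inj: "inj_on (\<lambda>(a, xi). (a, Suc j, xi)) ({1..j} \<times> (UNIV :: bool set))"
    by (auto simp: inj_on_def)
  have "card ((\<lambda>(a, xi). (a, Suc j, xi)) ` ({1..j} \<times> (UNIV :: bool set))) = j * 2"
    using card_image[OF inj] by (simp add: card_cartesian_product)
  moreover have "Sset j \<inter> (\<lambda>(a, xi). (a, Suc j, xi)) ` ({1..j} \<times> UNIV) = {}"
    unfolding Sset_def by auto
  ultimately have "card (Sset (Suc j)) = j * (j - 1) + j * 2"
    unfolding Sset_Suc using Suc finite_Sset by (subst card_Un_disjoint) auto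
  then show ?case by (cases j) (simp_all add: algebra_simps)
qed

lemma card_loser:
  assumes "2 \<le> j"
  shows "card (Sset j \<inter> {y. loser_idx y = k}) \<le> j - 1"
proof (cases "k \<in> {1..j}")
  case True
  have "Sset j \<inter> {y. loser_idx y = k} \<subseteq> (\<lambda>a. (a, k, True)) ` {1..<k} \<union> (\<lambda>b. (k, b, False)) ` {k<..j}"
    unfolding Sset_def loser_idx_def by (auto simp: image_iff split: if_splits)
  then have "card (Sset j \<inter> {y. loser_idx y = k}) \<le> card ((\<lambda>a. (a, k, True)) ` {1..<k} \<union> (\<lambda>b. (k, b, False)) ` {k<..j})"
    by (intro card_mono) auto
  also have "\<dots> \<le> card ((\<lambda>a. (a, k, True)) ` {1..<k}) + card ((\<lambda>b. (k, b, False)) ` {k<..j})"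
    by (rule card_Un_le)
  also have "\<dots> \<le> card {1..<k} + card {k<..j}"
    by (intro add_mono card_image_le) auto
  also have "\<dots> = j - 1" using True by auto
  finally show ?thesis .
next
  case False
  have "Sset j \<inter> {y. loser_idx y = k} = {}"
    using False unfolding Sset_def loser_idx_def by (auto split: if_splits)
  then show ?thesis by simp
qed

lemma prob_loser:
  assumes "2 \<le> j"
  shows "measure_pmf.prob (pmf_of_set (Sset j)) {y. loser_idx y = k} \<le> 1 / real j"
proof -
  have "(1, 2, True) \<in> Sset j" using assms unfolding Sset_def by auto
  then have ne: "Sset j \<noteq> {}" by blast
  have "measure_pmf.prob (pmf_of_set (Sset j)) {y. loser_idx y = k} = real (card (Sset j \<inter> {y. loser_idx y = k})) / real (card (Sset j))"
    by (rule measure_pmf_of_set[OF ne finite_Sset])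
  also have "\<dots> \<le> real (j - 1) / real (j * (j - 1))"
    unfolding card_Sset using card_loser[OF assms, of k] assms
    by (intro divide_right_mono) auto
  also have "\<dots> = 1 / real j" using assms by (simp add: of_nat_diff)
  finally show ?thesis .
qed

lemma coal_upd: "k \<le> n - j \<Longrightarrow> coal n (ch(j := y)) k = coal n ch k"
  by (induction k) auto



lemma prob_pair_bound:
  fixes P :: "'a pmf" and Q :: "'b pmf"
  assumes "\<And>f. measure_pmf.prob P {y. R y f} \<le> c"
  shows "measure_pmf.prob (pair_pmf P Q) {(y, f). R y f} \<le> c"
proof -
  have c0: "0 \<le> c" using assms[of undefined] measure_nonneg[of P] by (meson order_trans)
  have "emeasure (pair_pmf P Q) {(y, f). R y f} = emeasure (pair_pmf Q P) {(f, y). R y f}"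
  proof -
    have e: "(\<lambda>(x, y). (y, x)) -` {(y, f). R y f} = {(f, y). R y f}" by auto
    show ?thesis by (subst pair_commute_pmf) (simp only: emeasure_map_pmf e)
  qed
  also have "\<dots> = (\<integral>\<^sup>+x. indicator {(f, y). R y f} x \<partial>pair_pmf Q P)"
    by (simp add: nn_integral_indicator)
  also have "\<dots> = (\<integral>\<^sup>+f. \<integral>\<^sup>+y. indicator {(f, y). R y f} (f, y) \<partial>P \<partial>Q)"
    by (rule nn_integral_pair_pmf')
  also have "\<dots> = (\<integral>\<^sup>+f. emeasure P {y. R y f} \<partial>Q)"
  proof (intro nn_integral_cong)
    fix f
    have "(\<lambda>y. indicator {(f, y). R y f} (f, y) :: ennreal) = indicator {y. R y f}"
      by (auto simp: indicator_def)
    then show "(\<integral>\<^sup>+y. indicator {(f, y). R y f} (f, y) \<partial>P) = emeasure P {y. R y f}"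
      by (simp add: nn_integral_indicator)
  qed
  also have "\<dots> \<le> (\<integral>\<^sup>+f. ennreal c \<partial>Q)"
    by (intro nn_integral_mono) (simp add: measure_pmf.emeasure_eq_measure assms ennreal_leI)
  also have "\<dots> = ennreal c" by simp
  finally have "ennreal (measure_pmf.prob (pair_pmf P Q) {(y, f). R y f}) \<le> ennreal c"
    by (simp add: measure_pmf.emeasure_eq_measure)
  then show ?thesis using c0 by simp
qed

lemma prob_Ev:
  assumes "j \<in> {2..n}"
  shows "measure_pmf.prob (choices n) {ch. Ev n i ch j} \<le> 1 / real j"
proof -
  define A where "A = {2..n} - {j}"
  have ins: "{2..n} = insert j A" "finite A" "j \<notin> A" using assms unfolding A_def by auto
  define Q where "Q = Pi_pmf A (0, 0, False) choice_pmf"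
  have ch: "choices n = map_pmf (\<lambda>(y, f). f(j := y)) (pair_pmf (choice_pmf j) Q)"
    unfolding choices_def Q_def ins(1) by (rule Pi_pmf_insert[OF ins(2,3)])
  define K where "K f = Kf n (coal n f (n - j)) j i" for f
  have pre: "(\<lambda>(y, f). f(j := y)) -` {ch. Ev n i ch j} = {(y, f). loser_idx y = K f}"
    unfolding Ev_def K_def by (auto simp: coal_upd)
  have "measure_pmf.prob (choices n) {ch. Ev n i ch j} = measure_pmf.prob (pair_pmf (choice_pmf j) Q) {(y, f). loser_idx y = K f}"
    unfolding ch measure_map_pmf pre ..
  also have "\<dots> \<le> 1 / real j"
  proof (rule prob_pair_bound)
    fix f
    have "choice_pmf j = pmf_of_set (Sset j)" unfolding choice_pmf_def Sset_def ..
    then show "measure_pmf.prob (choice_pmf j) {y. loser_idx y = K f} \<le> 1 / real j"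
      using prob_loser[of j "K f"] assms by simp
  qed
  finally show ?thesis .
qed

lemma valid_choices:
  assumes "ch \<in> set_pmf (choices n)"
  shows "valid n ch"
proof -
  have "ch \<in> PiE_dflt {2..n} (0, 0, False) (set_pmf \<circ> choice_pmf)"
    using set_Pi_pmf_subset'[of "{2..n}" "(0, 0, False)" choice_pmf] assms unfolding choices_def by auto
  then have m: "ch j \<in> set_pmf (choice_pmf j)" if "j \<in> {2..n}" for j
    using that unfolding PiE_dflt_def by auto
  show ?thesis unfolding valid_def
  proof
    fix j assume j: "j \<in> {2..n}"
    have "(1, 2, True) \<in> Sset j" using j unfolding Sset_def by auto
    then have ne: "Sset j \<noteq> {}" by blast
    have "choice_pmf j = pmf_of_set (Sset j)" unfolding choice_pmf_def Sset_def ..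
    then show "ch j \<in> Sset j" using m[OF j] set_pmf_of_set[OF ne finite_Sset] by simp
  qed
qed



lemma harm_le_ln: "1 \<le> L \<Longrightarrow> (harm L :: real) \<le> 1 + ln (real L)"
  using euler_mascheroni_sequence_decreasing[of 1 L] by (simp add: harm_def)

lemma sum_inv_le: "1 \<le> L \<Longrightarrow> (\<Sum>j\<in>{2..L}. 1 / real j) \<le> 1 + ln (real L)"
proof -
  assume L: "1 \<le> L"
  have "(\<Sum>j\<in>{2..L}. 1 / real j) \<le> (\<Sum>j\<in>{1..L}. 1 / real j)"
    by (intro sum_mono2) auto
  also have "\<dots> = harm L" unfolding harm_def by (simp add: divide_inverse)
  finally show ?thesis using harm_le_ln[OF L] by linarith
qed

lemma key_bound:
  fixes i n :: nat and \<epsilon> :: real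
  assumes eps: "\<epsilon> > 0" and ln1: "1 \<le> ln (real n)" and lnn: "(ln (real n))^2 \<le> real n"
  shows "measure_pmf.prob (choices n) {ch. \<bar>h_n2 n ch i / sqrt (ln (real n))\<bar> > \<epsilon>}
     \<le> (1 + ln ((ln (real n))^2)) / (\<epsilon> * sqrt (ln (real n)))"
proof -
  define L where "L = nat \<lfloor>(ln (real n))^2\<rfloor>"
  define s where "s = sqrt (ln (real n))"
  have s0: "s > 0" unfolding s_def using ln1 by simp
  have sq1: "1 \<le> (ln (real n))^2" using ln1 by (simp add: one_le_power)
  have Lr: "real L \<le> (ln (real n))^2" unfolding L_def using sq1 by linarith
  have L1: "1 \<le> L" unfolding L_def using sq1 by linarith
  have Ln: "L \<le> n" using Lr lnn by linarith
  define c where "c = \<epsilon> * s"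
  have c0: "c > 0" unfolding c_def using eps s0 by simp
  define u where "u ch = (\<Sum>j\<in>{2..L}. indicator {ch. Ev n i ch j} ch :: real)" for ch
  have ucard: "u ch = real (card {j\<in>{2..L}. Ev n i ch j})" for ch
  proof -
    have "u ch = (\<Sum>j\<in>{2..L}. if Ev n i ch j then 1 else 0)" unfolding u_def by (intro sum.cong) auto
    also have "\<dots> = (\<Sum>j\<in>{j\<in>{2..L}. Ev n i ch j}. 1)" by (subst sum.inter_filter) auto
    finally show ?thesis by simp
  qed
  let ?M = "measure_pmf (choices n)"
  have sub: "{ch. \<bar>h_n2 n ch i / s\<bar> > \<epsilon>} \<inter> set_pmf (choices n) \<subseteq> {ch \<in> space ?M. u ch \<ge> c}"
  proof
    fix ch assume ch: "ch \<in> {ch. \<bar>h_n2 n ch i / s\<bar> > \<epsilon>} \<inter> set_pmf (choices n)"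
    have v: "valid n ch" using ch valid_choices by blast
    note hb = h_n2_bound[OF v L1 Ln L_def, of i]
    have "\<epsilon> < h_n2 n ch i / s" using ch hb(1) s0 by auto
    then have "c < h_n2 n ch i" unfolding c_def using s0 by (simp add: field_simps)
    then show "ch \<in> {ch \<in> space ?M. u ch \<ge> c}" using hb(2) ucard by simp
  qed
  have "measure_pmf.prob (choices n) {ch. \<bar>h_n2 n ch i / s\<bar> > \<epsilon>}
      = measure_pmf.prob (choices n) ({ch. \<bar>h_n2 n ch i / s\<bar> > \<epsilon>} \<inter> set_pmf (choices n))"
    by (simp add: measure_Int_set_pmf)
  also have "\<dots> \<le> measure ?M {ch \<in> space ?M. u ch \<ge> c}"
    using sub by (intro measure_pmf.finite_measure_mono) auto
  finally have P1: "measure_pmf.prob (choices n) {ch. \<bar>h_n2 n ch i / s\<bar> > \<epsilon>} \<le> measure ?M {ch \<in> space ?M. u ch \<ge> c}" .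
  have int: "integrable ?M u" unfolding u_def
    by (intro Bochner_Integration.integrable_sum integrable_real_indicator) (auto simp: less_top[symmetric] measure_pmf.emeasure_finite)
  have "measure ?M {ch \<in> space ?M. u ch \<ge> c} \<le> (\<integral>x. u x \<partial>?M) / c"
    by (rule integral_Markov_inequality_measure[OF int _ _ c0]) (auto simp: u_def intro!: sum_nonneg)
  also have "(\<integral>x. u x \<partial>?M) = (\<Sum>j\<in>{2..L}. measure_pmf.prob (choices n) {ch. Ev n i ch j})"
    unfolding u_def by (subst Bochner_Integration.integral_sum) (auto intro!: integrable_real_indicator simp: less_top[symmetric] measure_pmf.emeasure_finite)
  also have "\<dots> \<le> (\<Sum>j\<in>{2..L}. 1 / real j)"
    using Ln by (intro sum_mono prob_Ev) auto
  also have "\<dots> \<le> 1 + ln (real L)" by (rule sum_inv_le[OF L1])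
  also have "\<dots> \<le> 1 + ln ((ln (real n))^2)" using Lr L1 by (simp add: ln_mono)
  finally have "measure ?M {ch \<in> space ?M. u ch \<ge> c} \<le> (1 + ln ((ln (real n))^2)) / c"
    using c0 by (simp add: divide_right_mono)
  with P1 show ?thesis unfolding c_def s_def by linarith
qed

theorem lemma5p2:
  fixes i :: nat and \<epsilon> :: real
  assumes "1 \<le> i" and "\<epsilon> > 0"
  shows "(\<lambda>n. measure_pmf.prob (choices n)
            {ch. \<bar>h_n2 n ch i / sqrt (ln (real n))\<bar> > \<epsilon>}) \<longlonglongrightarrow> 0"
proof -
  have ev1: "eventually (\<lambda>n. 1 \<le> ln (real n)) sequentially" by real_asymp
  have ev2: "eventually (\<lambda>n. (ln (real n))^2 \<le> real n) sequentially" by real_asymp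
  have ev: "eventually (\<lambda>n. 1 \<le> ln (real n) \<and> (ln (real n))^2 \<le> real n) sequentially"
    using eventually_conj[OF ev1 ev2] .
  have lim0: "(\<lambda>n. (1 + ln ((ln (real n))^2)) / sqrt (ln (real n))) \<longlonglongrightarrow> 0"
    by real_asymp
  have lim: "(\<lambda>n. (1 + ln ((ln (real n))^2)) / sqrt (ln (real n)) / \<epsilon>) \<longlonglongrightarrow> 0"
    using tendsto_divide_zero[OF lim0] .
  show ?thesis
  proof (rule tendsto_sandwich[OF _ _ tendsto_const lim])
    show "eventually (\<lambda>n. 0 \<le> measure_pmf.prob (choices n)
            {ch. \<bar>h_n2 n ch i / sqrt (ln (real n))\<bar> > \<epsilon>}) sequentially" by simp
    show "eventually (\<lambda>n. measure_pmf.prob (choices n)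
            {ch. \<bar>h_n2 n ch i / sqrt (ln (real n))\<bar> > \<epsilon>} \<le> (1 + ln ((ln (real n))^2)) / sqrt (ln (real n)) / \<epsilon>) sequentially"
      using ev
    proof eventually_elim
      case (elim n)
      then show ?case using key_bound[OF assms(2), of n i] by (simp add: divide_divide_eq_left mult.commute)
    qed
  qed
qed

end
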